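(* Consider the following kinetic transport model. Let $\{Z_k\}_{k\ge1}$ be a Markov chain on the two states $\{\mathrm{F},\mathrm{A}\}$ ("free" and "adsorbed") with initial distribution $\lambda=(\lambda_{\mathrm F},\lambda_{\mathrm A})$ and transition matrix $$\begin{pmatrix} p_{\mathrm F\mathrm F} & p_{\mathrm F\mathrm A}\\ p_{\mathrm A\mathrm F} & p_{\mathrm A\mathrm A}\end{pmatrix}=\begin{pmatrix}1-a & a\\ b & 1-b\end{pmatrix},\qquad a,b\in[0,1].$$ Let $K_n=\sum_{k=1}^n \mathbf 1_{\{Z_k=\mathrm F\}}$ and $f_n(k)=P(K_n=k)$ for $0\le k\le n$. Independently of $\{Z_k\}$, let $(X_k,Y_k)_{k\ge1}$ be i.i.d. random vectors in $\mathbb Z^2$ with $$P((X_k,Y_k)=(j,0))=\alpha,\qquad P((X_k,Y_k)=(0,j))=\beta\qquad (j=\pm1),$$ where $\alpha,\beta\ge0$ and $\alpha+\beta=1/2$. Define $S(0)=(0,0)$ and, for $n\ge1$, $$S(n)=(S_X(n),S_Y(n))=\sum_{k=1}^{K_n}(X_k+1,\,Y_k).$$ Then for $n\ge1$, $0\le x\le 2n$ and $-n\le y\le n$ with $x\equiv y\pmod 2$, $$P(S(n)=(x,y))=\sum_{k=\lceil x/2\rceil}^n f_n(k)\sum_{j=0\vee(x-k)}^{\frac{x+y}{2}\wedge\frac{x-y}{2}}\frac{k!\;\alpha^{2j+k-x}\beta^{x-2j}}{j!\,(j+k-x)!\,((x+y)/2-j)!\,((x-y)/2-j)!},$$ and $P(S(n)=(x,y))=0$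 if $x\not\equiv y\pmod 2$.
   Context: $c\vee d=\max\{c,d\}$, $c\wedge d=\min\{c,d\}$; $\lceil c\rceil$ is the least integer $\ge c$. An empty sum (upper limit smaller than lower limit) is zero. *)

theory Defs
  imports "HOL-Probability.Probability"
begin

datatype st = F | A

definition mc_init :: "real \<Rightarrow> real \<Rightarrow> st \<Rightarrow> real" where
  "mc_init lF lA z = (case z of F \<Rightarrow> lF | A \<Rightarrow> lA)"

definition mc_trans :: "real \<Rightarrow> real \<Rightarrow> st \<Rightarrow> st \<Rightarrow> real" where
  "mc_trans a b z w = (case (z, w) of
      (F, F) \<Rightarrow> 1 - a | (F, A) \<Rightarrow> a | (A, F) \<Rightarrow> b | (A, A) \<Rightarrow> 1 - b)"

definition mc_path_prob :: "real \<Rightarrow> real \<Rightarrow> real \<Rightarrow> real \<Rightarrow> st list \<Rightarrow> real" where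
  "mc_path_prob lF lA a b zs = (case zs of [] \<Rightarrow> 1
     | z # _ \<Rightarrow> mc_init lF lA z * (\<Prod>i<length zs - 1. mc_trans a b (zs ! i) (zs ! Suc i)))"

definition step_prob :: "real \<Rightarrow> real \<Rightarrow> int \<times> int \<Rightarrow> real" where
  "step_prob \<alpha> \<beta> v = (if v = (1, 0) \<or> v = (-1, 0) then \<alpha>
                        else if v = (0, 1) \<or> v = (0, -1) then \<beta> else 0)"

definition Kfree :: "(nat \<Rightarrow> 'w \<Rightarrow> st) \<Rightarrow> nat \<Rightarrow> 'w \<Rightarrow> nat" where
  "Kfree Z m \<omega> = card {k \<in> {1..m}. Z k \<omega> = F}"

definition Spos :: "(nat \<Rightarrow> 'w \<Rightarrow> st) \<Rightarrow> (nat \<Rightarrow> 'w \<Rightarrow> int) \<Rightarrow> (nat \<Rightarrow> 'w \<Rightarrow> int)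
    \<Rightarrow> nat \<Rightarrow> 'w \<Rightarrow> int \<times> int" where
  "Spos Z X Y m \<omega> = ((\<Sum>k = 1..Kfree Z m \<omega>. X k \<omega> + 1), (\<Sum>k = 1..Kfree Z m \<omega>. Y k \<omega>))"

end

theory Submission
  imports Defs "HOL-Combinatorics.Multiset_Permutations"
begin


definition D :: "(int \<times> int) set" where "D = {(1,0),(-1,0),(0,1),(0,-1)}"
definition Lk :: "nat \<Rightarrow> (int \<times> int) list set" where
  "Lk k = {vs. length vs = k \<and> set vs \<subseteq> D}"
definition condxy :: "int \<Rightarrow> int \<Rightarrow> (int \<times> int) list \<Rightarrow> bool" where
  "condxy x y vs \<longleftrightarrow> (\<Sum>j<length vs. fst (vs!j) + 1) = x \<and> (\<Sum>j<length vs. snd (vs!j)) = y"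
definition cnt4 :: "(int \<times> int) list \<Rightarrow> nat \<times> nat \<times> nat \<times> nat" where
  "cnt4 vs = (count_list vs (1,0), count_list vs (-1,0), count_list vs (0,1), count_list vs (0,-1))"

lemma finite_Lk: "finite (Lk k)"
proof -
  have "Lk k = {vs. set vs \<subseteq> D \<and> length vs = k}" by (auto simp: Lk_def)
  then show ?thesis using finite_lists_length_eq[of D k] by (simp add: D_def)
qed

lemma len_cnt: "set vs \<subseteq> D \<Longrightarrow> length vs = count_list vs (1,0) + count_list vs (-1,0) + count_list vs (0,1) + count_list vs (0,-1)"
  by (induction vs) (auto simp: D_def)

lemma prod_cnt: "set vs \<subseteq> D \<Longrightarrow> (\<Prod>j<length vs. step_prob \<alpha> \<beta> (vs!j)) = \<alpha> ^ (count_list vs (1,0) + count_list vs (-1,0)) * \<beta> ^ (count_list vs (0,1) + count_list vs (0,-1))"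
proof (induction vs)
  case Nil then show ?case by simp
next
  case (Cons a vs)
  have IH: "(\<Prod>j<length vs. step_prob \<alpha> \<beta> (vs!j)) = \<alpha> ^ (count_list vs (1,0) + count_list vs (-1,0)) * \<beta> ^ (count_list vs (0,1) + count_list vs (0,-1))"
    using Cons by simp
  have e: "(\<Prod>j<length (a#vs). step_prob \<alpha> \<beta> ((a#vs)!j)) = step_prob \<alpha> \<beta> a * (\<Prod>j<length vs. step_prob \<alpha> \<beta> (vs!j))"
    by (simp only: length_Cons prod.lessThan_Suc_shift nth_Cons_0 nth_Cons_Suc)
  have "a \<in> D" using Cons.prems by simp
  then have "a = (1,0) \<or> a = (-1,0) \<or> a = (0,1) \<or> a = (0,-1)" by (simp add: D_def)
  then show ?case unfolding e IH by (elim disjE) (simp_all add: step_prob_def)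
qed

lemma sumx_cnt: "set vs \<subseteq> D \<Longrightarrow> (\<Sum>j<length vs. fst (vs!j) + 1) = 2 * int (count_list vs (1,0)) + int (count_list vs (0,1)) + int (count_list vs (0,-1))"
proof (induction vs)
  case Nil then show ?case by simp
next
  case (Cons a vs)
  have e: "(\<Sum>j<length (a#vs). fst ((a#vs)!j) + 1) = (fst a + 1) + (\<Sum>j<length vs. fst (vs!j) + 1)"
    by (simp only: length_Cons sum.lessThan_Suc_shift nth_Cons_0 nth_Cons_Suc)
  have "a \<in> D" using Cons.prems by simp
  then have "a = (1,0) \<or> a = (-1,0) \<or> a = (0,1) \<or> a = (0,-1)" by (simp add: D_def)
  then show ?case unfolding e using Cons by (elim disjE) simp_all
qed

lemma sumy_cnt: "set vs \<subseteq> D \<Longrightarrow> (\<Sum>j<length vs. snd (vs!j)) = int (count_list vs (0,1)) - int (count_list vs (0,-1))"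
proof (induction vs)
  case Nil then show ?case by simp
next
  case (Cons a vs)
  have e: "(\<Sum>j<length (a#vs). snd ((a#vs)!j)) = snd a + (\<Sum>j<length vs. snd (vs!j))"
    by (simp only: length_Cons sum.lessThan_Suc_shift nth_Cons_0 nth_Cons_Suc)
  have "a \<in> D" using Cons.prems by simp
  then have "a = (1,0) \<or> a = (-1,0) \<or> a = (0,1) \<or> a = (0,-1)" by (simp add: D_def)
  then show ?case unfolding e using Cons by (elim disjE) simp_all
qed

definition Rm :: "nat \<Rightarrow> nat \<Rightarrow> nat \<Rightarrow> nat \<Rightarrow> (int \<times> int) multiset" where
  "Rm p q u v = replicate_mset p (1,0) + replicate_mset q (-1,0) + replicate_mset u (0,1) + replicate_mset v (0,-1)"

lemma mset_R: "set vs \<subseteq> D \<Longrightarrow> mset vs = Rm (count_list vs (1,0)) (count_list vs (-1,0)) (count_list vs (0,1)) (count_list vs (0,-1))"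
  by (induction vs) (auto simp: D_def Rm_def)

lemma set_Rm: "set_mset (Rm p q u v) \<subseteq> D"
  by (auto simp: Rm_def D_def split: if_splits)

lemma card_Rm: "real (card (permutations_of_multiset (Rm p q u v))) * (fact p * fact q * fact u * fact v) = fact (p+q+u+v)"
proof -
  let ?A = "Rm p q u v"
  have "(\<Prod>x\<in>set_mset ?A. fact (count ?A x) :: nat) = (\<Prod>x\<in>D. fact (count ?A x))"
    by (rule prod.mono_neutral_left) (use set_Rm in \<open>auto simp: D_def not_in_iff\<close>)
  also have "\<dots> = fact p * fact q * fact u * fact v"
    by (simp add: D_def Rm_def)
  finally have e: "(\<Prod>x\<in>set_mset ?A. fact (count ?A x) :: nat) = fact p * fact q * fact u * fact v" .
  have "card (permutations_of_multiset ?A) * (fact p * fact q * fact u * fact v) = (fact (p+q+u+v) :: nat)"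
    using card_permutations_of_multiset_aux[of ?A] unfolding e by (simp add: Rm_def)
  then have "real (card (permutations_of_multiset ?A) * (fact p * fact q * fact u * fact v)) = real (fact (p+q+u+v))"
    by simp
  then show ?thesis by (simp only: of_nat_mult of_nat_fact)
qed

lemma count_list_replicate': "count_list (replicate n a) b = (if a = b then n else 0)"
  by (induction n) auto

definition Wk :: "real \<Rightarrow> real \<Rightarrow> int \<Rightarrow> int \<Rightarrow> nat \<Rightarrow> real" where
  "Wk \<alpha> \<beta> x y k = (\<Sum>vs \<in> {vs \<in> Lk k. condxy x y vs}. \<Prod>j<k. step_prob \<alpha> \<beta> (vs!j))"

lemma cond_cnt: "set vs \<subseteq> D \<Longrightarrow> condxy x y vs \<longleftrightarrow>
   2 * int (count_list vs (1,0)) + int (count_list vs (0,1)) + int (count_list vs (0,-1)) = x \<and>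
   int (count_list vs (0,1)) - int (count_list vs (0,-1)) = y"
  by (simp add: condxy_def sumx_cnt sumy_cnt)

lemma W_odd_empty: "odd (x - y) \<Longrightarrow> {vs \<in> Lk k. condxy x y vs} = {}"
proof (rule ccontr)
  assume o: "odd (x - y)" and "{vs \<in> Lk k. condxy x y vs} \<noteq> {}"
  then obtain vs where vs: "vs \<in> Lk k" "condxy x y vs" by blast
  then have "set vs \<subseteq> D" by (simp add: Lk_def)
  with vs have "x - y = 2 * (int (count_list vs (1,0)) + int (count_list vs (0,-1)))"
    by (simp add: cond_cnt)
  with o show False by simp
qed

lemma W_odd: "odd (x - y) \<Longrightarrow> Wk \<alpha> \<beta> x y k = 0"
  by (simp add: Wk_def W_odd_empty)

lemma W_closed:
  assumes ev: "even (x - y)"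
  shows "Wk \<alpha> \<beta> x y k = (\<Sum>j\<in>{max 0 (x - int k) .. min ((x+y) div 2) ((x-y) div 2)}.
     fact k * \<alpha> ^ nat (2*j + int k - x) * \<beta> ^ nat (x - 2*j) /
     (fact (nat j) * fact (nat (j + int k - x)) * fact (nat ((x+y) div 2 - j)) * fact (nat ((x-y) div 2 - j))))"
proof -
  define S where "S = {vs \<in> Lk k. condxy x y vs}"
  define Pr where "Pr = (\<lambda>vs::(int\<times>int) list. \<Prod>j<k. step_prob \<alpha> \<beta> (vs!j))"
  define G where "G = (\<lambda>(p::nat,q::nat,u::nat,v::nat). fact k * \<alpha>^(p+q) * \<beta>^(u+v) / (fact p * fact q * fact u * fact v :: real))"
  define J where "J = {max 0 (x - int k) .. min ((x+y) div 2) ((x-y) div 2)}"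
  define h where "h = (\<lambda>j. (nat j, nat (j + int k - x), nat ((x+y) div 2 - j), nat ((x-y) div 2 - j)))"
  have finS: "finite S" using finite_Lk by (simp add: S_def)
  obtain m where m: "x - y = 2 * m" using ev by blast
  have xy1: "(x + y) div 2 = y + m" using m by presburger
  have xy2: "(x - y) div 2 = m" using m by presburger
  have "Wk \<alpha> \<beta> x y k = sum Pr S" by (simp add: Wk_def S_def Pr_def)
  also have "\<dots> = (\<Sum>c\<in>cnt4 ` S. sum Pr {vs \<in> S. cnt4 vs = c})"
    by (rule sum.group[symmetric]) (use finS in auto)
  also have "\<dots> = sum G (cnt4 ` S)"
  proof (rule sum.cong[OF refl])
    fix c assume "c \<in> cnt4 ` S"
    then obtain vs0 where vs0: "vs0 \<in> S" "c = cnt4 vs0" by blast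
    obtain p q u v where c: "c = (p,q,u,v)" by (cases c) auto
    have s0: "set vs0 \<subseteq> D" "length vs0 = k" "condxy x y vs0" using vs0 by (auto simp: S_def Lk_def)
    have cs: "count_list vs0 (1,0) = p" "count_list vs0 (-1,0) = q" "count_list vs0 (0,1) = u" "count_list vs0 (0,-1) = v"
      using vs0(2) c by (auto simp: cnt4_def)
    have k: "k = p + q + u + v" using len_cnt[OF s0(1)] s0(2) cs by simp
    have seteq: "{vs \<in> S. cnt4 vs = c} = permutations_of_multiset (Rm p q u v)"
    proof (intro equalityI subsetI)
      fix vs assume "vs \<in> {vs \<in> S. cnt4 vs = c}"
      then have "set vs \<subseteq> D" "cnt4 vs = (p,q,u,v)" using c by (auto simp: S_def Lk_def)
      then show "vs \<in> permutations_of_multiset (Rm p q u v)"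
        using mset_R[of vs] by (auto simp: cnt4_def permutations_of_multiset_def)
    next
      fix ws assume "ws \<in> permutations_of_multiset (Rm p q u v)"
      then have mw: "mset ws = Rm p q u v" by (simp add: permutations_of_multiset_def)
      have sw: "set ws \<subseteq> D" using set_Rm[of p q u v] mw by (metis set_mset_mset)
      have cw: "count_list ws a = count (Rm p q u v) a" for a using mw by (metis count_mset)
      have cw': "count_list ws (1,0) = p" "count_list ws (-1,0) = q" "count_list ws (0,1) = u" "count_list ws (0,-1) = v"
        by (simp_all add: cw Rm_def)
      have "length ws = k" using len_cnt[OF sw] cw' k by simp
      moreover have "condxy x y ws" using s0(3) cond_cnt[OF sw] cond_cnt[OF s0(1)] cw' cs by simp
      ultimately show "ws \<in> {vs \<in> S. cnt4 vs = c}" using sw cw' c by (simp add: S_def Lk_def cnt4_def)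
    qed
    have "sum Pr {vs \<in> S. cnt4 vs = c} = sum (\<lambda>_. \<alpha>^(p+q) * \<beta>^(u+v)) {vs \<in> S. cnt4 vs = c}"
    proof (rule sum.cong[OF refl])
      fix vs assume "vs \<in> {vs \<in> S. cnt4 vs = c}"
      then have "set vs \<subseteq> D" "length vs = k" "cnt4 vs = (p,q,u,v)" using c by (auto simp: S_def Lk_def)
      then show "Pr vs = \<alpha>^(p+q) * \<beta>^(u+v)" using prod_cnt[of vs \<alpha> \<beta>] by (simp add: Pr_def cnt4_def)
    qed
    also have "\<dots> = real (card (permutations_of_multiset (Rm p q u v))) * (\<alpha>^(p+q) * \<beta>^(u+v))"
      by (simp add: seteq)
    also have "\<dots> = G c"
    proof -
      have pos: "(fact p * fact q * fact u * fact v :: real) > 0" by simp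
      show ?thesis using card_Rm[of p q u v] pos unfolding G_def c k
        by (simp add: field_simps)
    qed
    finally show "sum Pr {vs \<in> S. cnt4 vs = c} = G c" .
  qed
  also have "cnt4 ` S = h ` J"
  proof (intro equalityI subsetI)
    fix c assume "c \<in> cnt4 ` S"
    then obtain vs where vs: "vs \<in> S" "c = cnt4 vs" by blast
    have s0: "set vs \<subseteq> D" "length vs = k" "condxy x y vs" using vs by (auto simp: S_def Lk_def)
    define p where "p = count_list vs (1,0)"
    define q where "q = count_list vs (-1,0)"
    define u where "u = count_list vs (0,1)"
    define v where "v = count_list vs (0,-1)"
    have k: "k = p + q + u + v" using len_cnt[OF s0(1)] s0(2) by (simp add: p_def q_def u_def v_def)
    have cx: "2 * int p + int u + int v = x" "int u - int v = y"
      using cond_cnt[OF s0(1)] s0(3) by (simp_all add: p_def q_def u_def v_def)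
    have "int p \<in> J" "h (int p) = c"
      using k cx xy1 xy2 vs(2) by (auto simp: J_def h_def cnt4_def p_def q_def u_def v_def)
    then show "c \<in> h ` J" by blast
  next
    fix c assume "c \<in> h ` J"
    then obtain j where j: "j \<in> J" "c = h j" by blast
    define ws where "ws = replicate (nat j) (1::int,0::int) @ replicate (nat (j + int k - x)) (-1,0)
       @ replicate (nat ((x+y) div 2 - j)) (0,1) @ replicate (nat ((x-y) div 2 - j)) (0,-1)"
    have sw: "set ws \<subseteq> D" by (auto simp: ws_def D_def)
    have cw: "count_list ws (1,0) = nat j" "count_list ws (-1,0) = nat (j + int k - x)"
       "count_list ws (0,1) = nat ((x+y) div 2 - j)" "count_list ws (0,-1) = nat ((x-y) div 2 - j)"
      by (simp_all add: ws_def count_list_replicate')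
    have jb: "0 \<le> j" "x - int k \<le> j" "j \<le> y + m" "j \<le> m" using j(1) xy1 xy2 by (auto simp: J_def)
    have "int (nat j + nat (j + int k - x) + nat (y + m - j) + nat (m - j)) = int k" using jb m by simp
    then have "nat j + nat (j + int k - x) + nat (y + m - j) + nat (m - j) = k" by (simp only: of_nat_eq_iff)
    then have "length ws = k" using len_cnt[OF sw] cw xy1 xy2 by simp
    moreover have "condxy x y ws" using cond_cnt[OF sw] cw xy1 xy2 jb m by simp
    moreover have "cnt4 ws = c" using cw j(2) by (simp add: cnt4_def h_def)
    ultimately show "c \<in> cnt4 ` S" using sw by (auto simp: S_def Lk_def)
  qed
  also have "sum G (h ` J) = sum (G \<circ> h) J"
    by (rule sum.reindex) (auto simp: inj_on_def h_def J_def eq_nat_nat_iff)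
  also have "\<dots> = (\<Sum>j\<in>J. fact k * \<alpha> ^ nat (2*j + int k - x) * \<beta> ^ nat (x - 2*j) /
     (fact (nat j) * fact (nat (j + int k - x)) * fact (nat ((x+y) div 2 - j)) * fact (nat ((x-y) div 2 - j))))"
  proof (rule sum.cong[OF refl])
    fix j assume "j \<in> J"
    then have jb: "0 \<le> j" "x - int k \<le> j" "j \<le> y + m" "j \<le> m" using xy1 xy2 by (auto simp: J_def)
    have e1: "nat j + nat (j + int k - x) = nat (2*j + int k - x)" using jb by simp
    have e2: "nat ((x+y) div 2 - j) + nat ((x-y) div 2 - j) = nat (x - 2*j)" using jb xy1 xy2 m by simp
    show "(G \<circ> h) j = fact k * \<alpha> ^ nat (2*j + int k - x) * \<beta> ^ nat (x - 2*j) /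
     (fact (nat j) * fact (nat (j + int k - x)) * fact (nat ((x+y) div 2 - j)) * fact (nat ((x-y) div 2 - j)))"
      by (simp add: G_def h_def e1 e2 del: of_nat_fact)
  qed
  finally show ?thesis by (simp add: J_def)
qed

lemma Lk_Suc: "Lk (Suc m) = (\<lambda>(d,vs). d # vs) ` (D \<times> Lk m)"
proof (intro equalityI subsetI)
  fix ws assume "ws \<in> Lk (Suc m)"
  then obtain d vs where "ws = d # vs" "length vs = m" "d \<in> D" "set vs \<subseteq> D"
    by (cases ws) (auto simp: Lk_def)
  then show "ws \<in> (\<lambda>(d,vs). d # vs) ` (D \<times> Lk m)" by (force simp: Lk_def)
qed (auto simp: Lk_def)

lemma sum_prod_Lk: "(\<Sum>vs\<in>Lk m. \<Prod>j<m. g (vs!j)) = (\<Sum>d\<in>D. g d :: real) ^ m"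
proof (induction m)
  case 0
  have "Lk 0 = {[]}" by (auto simp: Lk_def)
  then show ?case by simp
next
  case (Suc m)
  have inj: "inj_on (\<lambda>(d,vs). d # vs) (D \<times> Lk m)" by (auto simp: inj_on_def)
  have "(\<Sum>vs\<in>Lk (Suc m). \<Prod>j<Suc m. g (vs!j)) = (\<Sum>p\<in>D \<times> Lk m. \<Prod>j<Suc m. g ((fst p # snd p)!j))"
    unfolding Lk_Suc by (subst sum.reindex[OF inj]) (simp add: case_prod_beta)
  also have "\<dots> = (\<Sum>p\<in>D \<times> Lk m. g (fst p) * (\<Prod>j<m. g (snd p ! j)))"
    by (simp only: prod.lessThan_Suc_shift nth_Cons_0 nth_Cons_Suc)
  also have "\<dots> = (\<Sum>d\<in>D. \<Sum>vs\<in>Lk m. g d * (\<Prod>j<m. g (vs ! j)))"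
    by (simp add: sum.cartesian_product case_prod_beta)
  also have "\<dots> = (\<Sum>d\<in>D. g d) * (\<Sum>vs\<in>Lk m. \<Prod>j<m. g (vs ! j))"
    by (simp add: sum_distrib_left sum_distrib_right sum.swap[of _ D])
  finally show ?case using Suc by simp
qed

lemma W_small: "2 * int k < x \<Longrightarrow> Wk \<alpha> \<beta> x y k = 0"
proof -
  assume a: "2 * int k < x"
  have "{vs \<in> Lk k. condxy x y vs} = {}"
  proof (rule ccontr)
    assume "{vs \<in> Lk k. condxy x y vs} \<noteq> {}"
    then obtain vs where vs: "set vs \<subseteq> D" "length vs = k" "condxy x y vs" by (auto simp: Lk_def)
    have "x = 2 * int (count_list vs (1,0)) + int (count_list vs (0,1)) + int (count_list vs (0,-1))"
      using cond_cnt[OF vs(1)] vs(3) by simp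
    moreover have "k = count_list vs (1,0) + count_list vs (-1,0) + count_list vs (0,1) + count_list vs (0,-1)"
      using len_cnt[OF vs(1)] vs(2) by simp
    ultimately show False using a by linarith
  qed
  then show ?thesis unfolding Wk_def by (simp only: sum.empty)
qed




theorem proposition1:
  fixes M :: "'w measure"
    and Z :: "nat \<Rightarrow> 'w \<Rightarrow> st"
    and X Y :: "nat \<Rightarrow> 'w \<Rightarrow> int"
    and lF lA a b \<alpha> \<beta> :: real
    and n :: nat and x y :: int
  assumes M: "prob_space M"
    and Zmeas: "\<And>k. Z k \<in> measurable M (count_space UNIV)"
    and Xmeas: "\<And>k. X k \<in> measurable M (count_space UNIV)"
    and Ymeas: "\<And>k. Y k \<in> measurable M (count_space UNIV)"
    and lam: "lF \<ge> 0" "lA \<ge> 0" "lF + lA = 1"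
    and ab: "0 \<le> a" "a \<le> 1" "0 \<le> b" "b \<le> 1"
    and albe: "\<alpha> \<ge> 0" "\<beta> \<ge> 0" "\<alpha> + \<beta> = 1/2"
    and law: "\<And>(zs :: st list) (vs :: (int \<times> int) list).
      measure M {\<omega> \<in> space M. (\<forall>i < length zs. Z (Suc i) \<omega> = zs ! i) \<and>
                             (\<forall>j < length vs. (X (Suc j) \<omega>, Y (Suc j) \<omega>) = vs ! j)}
      = mc_path_prob lF lA a b zs * (\<Prod>j < length vs. step_prob \<alpha> \<beta> (vs ! j))"
    and n: "n \<ge> 1"
  defines "S \<equiv> Spos Z X Y"
    and "f \<equiv> (\<lambda>m k. measure M {\<omega> \<in> space M. Kfree Z m \<omega> = k})"
  shows "(0 \<le> x \<and> x \<le> 2 * int n \<and> - int n \<le> y \<and> y \<le> int n \<and> even (x - y) \<longrightarrow>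
           measure M {\<omega> \<in> space M. S n \<omega> = (x, y)}
         = (\<Sum>k \<in> {\<lceil>real_of_int x / 2\<rceil> .. int n}. f n (nat k) *
             (\<Sum>j \<in> {max 0 (x - k) .. min ((x + y) div 2) ((x - y) div 2)}.
                fact (nat k) * \<alpha> ^ nat (2 * j + k - x) * \<beta> ^ nat (x - 2 * j) /
                (fact (nat j) * fact (nat (j + k - x)) * fact (nat ((x + y) div 2 - j))
                  * fact (nat ((x - y) div 2 - j))))))
       \<and> (odd (x - y) \<longrightarrow> measure M {\<omega> \<in> space M. S n \<omega> = (x, y)} = 0)"
proof -
  interpret P: prob_space M by (rule M)
  define Cyl where "Cyl = (\<lambda>(zs::st list) (vs::(int\<times>int) list). {\<omega>\<in>space M.
     (\<forall>i\<in>{..<length zs}. Z (Suc i) \<omega> = zs!i) \<and>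
     (\<forall>j\<in>{..<length vs}. X (Suc j) \<omega> = fst (vs!j) \<and> Y (Suc j) \<omega> = snd (vs!j))})"
  define mc where "mc = mc_path_prob lF lA a b"
  define cnt where "cnt = (\<lambda>zs::st list. card {i. i < length zs \<and> zs!i = F})"
  have law': "measure M (Cyl zs vs) = mc zs * (\<Prod>j<length vs. step_prob \<alpha> \<beta> (vs!j))" for zs vs
  proof -
    have "Cyl zs vs = {\<omega> \<in> space M. (\<forall>i < length zs. Z (Suc i) \<omega> = zs ! i) \<and>
                             (\<forall>j < length vs. (X (Suc j) \<omega>, Y (Suc j) \<omega>) = vs ! j)}"
      by (auto simp: Cyl_def prod_eq_iff)
    then show ?thesis using law[of zs vs] by (simp add: mc_def)
  qed
  have setZ: "{\<omega>\<in>space M. Z i \<omega> = c} \<in> sets M" for i c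
  proof -
    have "Z i -` {c} \<inter> space M \<in> sets M" by (rule measurable_sets[OF Zmeas]) simp
    moreover have "Z i -` {c} \<inter> space M = {\<omega>\<in>space M. Z i \<omega> = c}" by auto
    ultimately show ?thesis by simp
  qed
  have setX: "{\<omega>\<in>space M. X i \<omega> = c} \<in> sets M" for i c
  proof -
    have "X i -` {c} \<inter> space M \<in> sets M" by (rule measurable_sets[OF Xmeas]) simp
    moreover have "X i -` {c} \<inter> space M = {\<omega>\<in>space M. X i \<omega> = c}" by auto
    ultimately show ?thesis by simp
  qed
  have setY: "{\<omega>\<in>space M. Y i \<omega> = c} \<in> sets M" for i c
  proof -
    have "Y i -` {c} \<inter> space M \<in> sets M" by (rule measurable_sets[OF Ymeas]) simp
    moreover have "Y i -` {c} \<inter> space M = {\<omega>\<in>space M. Y i \<omega> = c}" by auto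
    ultimately show ?thesis by simp
  qed
  have Cyl_sets: "Cyl zs vs \<in> sets M" for zs vs
    unfolding Cyl_def
    by (intro sets.sets_Collect_conj sets.sets_Collect_finite_All setZ setX setY finite_lessThan)
  have Cyl_uniq: "zs = zs' \<and> vs = vs'" if "\<omega> \<in> Cyl zs vs" "\<omega> \<in> Cyl zs' vs'"
     "length zs = length zs'" "length vs = length vs'" for \<omega> zs vs zs' vs'
  proof
    show "zs = zs'" using that by (intro nth_equalityI) (auto simp: Cyl_def)
    show "vs = vs'" using that by (intro nth_equalityI) (auto simp: Cyl_def prod_eq_iff)
  qed
  have Cyl_uniq_z: "zs = zs'" if "\<omega> \<in> Cyl zs vs" "\<omega> \<in> Cyl zs' vs'"
     "length zs = length zs'" for \<omega> zs vs zs' vs'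
    using that by (intro nth_equalityI) (auto simp: Cyl_def)
  have K_cyl: "Kfree Z n \<omega> = cnt zs" if KH: "\<omega> \<in> Cyl zs vs" "length zs = n" for \<omega> zs vs
  proof -
    have "{k\<in>{1..n}. Z k \<omega> = F} = Suc ` {i. i < length zs \<and> zs!i = F}"
    proof (intro equalityI subsetI)
      fix k assume k: "k \<in> {k\<in>{1..n}. Z k \<omega> = F}"
      then have "k = Suc (k - 1)" "k - 1 < n" by auto
      moreover have "Z (Suc (k-1)) \<omega> = zs!(k-1)" using that \<open>k - 1 < n\<close> by (auto simp: Cyl_def)
      ultimately show "k \<in> Suc ` {i. i < length zs \<and> zs!i = F}" using k that(2)
        by (intro image_eqI[of _ _ "k-1"]) auto
    next
      fix k assume "k \<in> Suc ` {i. i < length zs \<and> zs!i = F}"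
      then obtain i where i: "k = Suc i" "i < n" "zs!i = F" using KH(2) by auto
      moreover have "Z (Suc i) \<omega> = zs!i" using KH i by (auto simp: Cyl_def)
      ultimately show "k \<in> {k\<in>{1..n}. Z k \<omega> = F}" by auto
    qed
    then show ?thesis by (simp add: Kfree_def cnt_def card_image)
  qed
  have cnt_le: "cnt zs \<le> length zs" for zs
  proof -
    have "card {i. i < length zs \<and> zs!i = F} \<le> card {..<length zs}" by (rule card_mono) auto
    then show ?thesis by (simp add: cnt_def)
  qed
  have S_cyl: "S n \<omega> = (x, y) \<longleftrightarrow> condxy x y vs"
    if "\<omega> \<in> Cyl zs vs" "length zs = n" "length vs = cnt zs" for \<omega> zs vs
  proof -
    have K: "Kfree Z n \<omega> = length vs" using K_cyl[OF that(1,2)] that(3) by simp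
    have "S n \<omega> = ((\<Sum>j<length vs. X (Suc j) \<omega> + 1), (\<Sum>j<length vs. Y (Suc j) \<omega>))"
      unfolding S_def Spos_def K by (simp add: sum.atLeast1_atMost_eq)
    also have "\<dots> = ((\<Sum>j<length vs. fst (vs!j) + 1), (\<Sum>j<length vs. snd (vs!j)))"
      using that(1) by (auto simp: Cyl_def intro!: sum.cong)
    finally show ?thesis by (simp add: condxy_def)
  qed
  define Zn where "Zn = {zs::st list. length zs = n}"
  have finZn: "finite Zn"
  proof -
    have "(UNIV::st set) = {F, A}" using st.exhaust by auto
    then have "finite (UNIV::st set)" by (metis finite.emptyI finite.insertI)
    then show ?thesis using finite_lists_length_eq[of "UNIV::st set" n] by (simp add: Zn_def)
  qed
  have Zof: "map (\<lambda>i. Z (Suc i) \<omega>) [0..<n] \<in> Zn" "\<omega> \<in> Cyl (map (\<lambda>i. Z (Suc i) \<omega>) [0..<n]) []"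
    if "\<omega> \<in> space M" for \<omega>
    using that by (auto simp: Zn_def Cyl_def)

  define G where "G = {\<omega>\<in>space M. \<forall>j\<in>{..<n}. (X (Suc j) \<omega>, Y (Suc j) \<omega>) \<in> D}"
  have G_eq: "G = (\<Union>vs\<in>Lk n. Cyl [] vs)"
  proof (intro equalityI subsetI)
    fix \<omega> assume w: "\<omega> \<in> G"
    let ?vs = "map (\<lambda>j. (X (Suc j) \<omega>, Y (Suc j) \<omega>)) [0..<n]"
    have "?vs \<in> Lk n" using w by (auto simp: G_def Lk_def)
    moreover have "\<omega> \<in> Cyl [] ?vs" using w by (simp add: G_def Cyl_def)
    ultimately show "\<omega> \<in> (\<Union>vs\<in>Lk n. Cyl [] vs)" by blast
  next
    fix \<omega> assume "\<omega> \<in> (\<Union>vs\<in>Lk n. Cyl [] vs)"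
    then obtain vs where vs: "length vs = n" "set vs \<subseteq> D" "\<omega> \<in> Cyl [] vs" by (auto simp: Lk_def)
    have "(X (Suc j) \<omega>, Y (Suc j) \<omega>) \<in> D" if "j < n" for j
    proof -
      have "(X (Suc j) \<omega>, Y (Suc j) \<omega>) = vs!j" using vs(1,3) that by (auto simp: Cyl_def prod_eq_iff)
      also have "\<dots> \<in> D" using vs(1,2) that nth_mem by blast
      finally show ?thesis .
    qed
    then show "\<omega> \<in> G" using vs(3) by (auto simp: G_def Cyl_def)
  qed
  have G_sets: "G \<in> sets M"
    unfolding G_eq by (intro sets.finite_UN finite_Lk Cyl_sets)
  have "measure M G = (\<Sum>vs\<in>Lk n. measure M (Cyl [] vs))"
    unfolding G_eq
  proof (rule measure_finite_Union)
    show "disjoint_family_on (Cyl []) (Lk n)"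
      unfolding disjoint_family_on_def
      using Cyl_uniq[of _ "[]" _ "[]"] by (auto simp: Lk_def)
  qed (use finite_Lk Cyl_sets in auto)
  also have "\<dots> = (\<Sum>vs\<in>Lk n. \<Prod>j<n. step_prob \<alpha> \<beta> (vs!j))"
    by (intro sum.cong) (auto simp: law' mc_def mc_path_prob_def Lk_def)
  also have "\<dots> = (\<Sum>d\<in>D. step_prob \<alpha> \<beta> d) ^ n" by (rule sum_prod_Lk)
  also have "(\<Sum>d\<in>D. step_prob \<alpha> \<beta> d) = 1" using albe by (simp add: D_def step_prob_def)
  finally have mG: "measure M G = 1" by simp
  have nullG: "space M - G \<in> null_sets M"
  proof (rule null_setsI)
    have "measure M (space M - G) = 0" using P.prob_compl[OF G_sets] mG by simp
    then show "emeasure M (space M - G) = 0" by (simp add: P.emeasure_eq_measure)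
  qed (use G_sets in auto)

  have fK: "f n k = (\<Sum>zs\<in>{zs\<in>Zn. cnt zs = k}. mc zs)" for k
  proof -
    have eq: "{\<omega> \<in> space M. Kfree Z n \<omega> = k} = (\<Union>zs\<in>{zs\<in>Zn. cnt zs = k}. Cyl zs [])"
    proof (intro equalityI subsetI)
      fix \<omega> assume w: "\<omega> \<in> {\<omega> \<in> space M. Kfree Z n \<omega> = k}"
      then have "\<omega> \<in> space M" by simp
      let ?zs = "map (\<lambda>i. Z (Suc i) \<omega>) [0..<n]"
      have "cnt ?zs = k" using K_cyl[OF Zof(2)[OF \<open>\<omega> \<in> space M\<close>]] w by simp
      then have "?zs \<in> {zs\<in>Zn. cnt zs = k}" using Zof(1)[OF \<open>\<omega> \<in> space M\<close>] by simp
      with Zof(2)[OF \<open>\<omega> \<in> space M\<close>] show "\<omega> \<in> (\<Union>zs\<in>{zs\<in>Zn. cnt zs = k}. Cyl zs [])"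
        by blast
    next
      fix \<omega> assume "\<omega> \<in> (\<Union>zs\<in>{zs\<in>Zn. cnt zs = k}. Cyl zs [])"
      then obtain zs where "zs \<in> Zn" "cnt zs = k" "\<omega> \<in> Cyl zs []" by blast
      then show "\<omega> \<in> {\<omega> \<in> space M. Kfree Z n \<omega> = k}" using K_cyl[of \<omega> zs "[]"]
        by (auto simp: Zn_def Cyl_def)
    qed
    have "f n k = measure M (\<Union>zs\<in>{zs\<in>Zn. cnt zs = k}. Cyl zs [])" by (simp add: f_def eq)
    also have "\<dots> = (\<Sum>zs\<in>{zs\<in>Zn. cnt zs = k}. measure M (Cyl zs []))"
    proof (rule measure_finite_Union)
      show "disjoint_family_on (\<lambda>zs. Cyl zs []) {zs\<in>Zn. cnt zs = k}"
        unfolding disjoint_family_on_def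
        using Cyl_uniq[of _ _ "[]" _ "[]"] by (auto simp: Zn_def)
    qed (use finZn Cyl_sets in auto)
    also have "\<dots> = (\<Sum>zs\<in>{zs\<in>Zn. cnt zs = k}. mc zs)" by (simp add: law')
    finally show ?thesis .
  qed

  define E where "E = {\<omega> \<in> space M. S n \<omega> = (x, y)}"
  define Q where "Q = (SIGMA zs:Zn. {vs. length vs = cnt zs \<and> condxy x y vs})"
  define PP where "PP = (SIGMA zs:Zn. {vs \<in> Lk (cnt zs). condxy x y vs})"
  have E_char: "\<omega> \<in> E \<longleftrightarrow> (\<exists>p\<in>Q. \<omega> \<in> Cyl (fst p) (snd p))" if w: "\<omega> \<in> space M" for \<omega>
  proof
    assume "\<omega> \<in> E"
    let ?zs = "map (\<lambda>i. Z (Suc i) \<omega>) [0..<n]"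
    let ?vs = "map (\<lambda>j. (X (Suc j) \<omega>, Y (Suc j) \<omega>)) [0..<cnt ?zs]"
    have c: "\<omega> \<in> Cyl ?zs ?vs" using w by (simp add: Cyl_def)
    have "condxy x y ?vs" using S_cyl[OF c] \<open>\<omega> \<in> E\<close> by (simp add: E_def)
    then have "(?zs, ?vs) \<in> Q" by (simp add: Q_def Zn_def)
    with c show "\<exists>p\<in>Q. \<omega> \<in> Cyl (fst p) (snd p)" by force
  next
    assume "\<exists>p\<in>Q. \<omega> \<in> Cyl (fst p) (snd p)"
    then obtain zs vs where "zs \<in> Zn" "length vs = cnt zs" "condxy x y vs" "\<omega> \<in> Cyl zs vs"
      by (auto simp: Q_def)
    then show "\<omega> \<in> E" using S_cyl[of \<omega> zs vs] w by (simp add: E_def Zn_def)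
  qed
  have E_sets: "E \<in> sets M"
  proof -
    have "E = (\<Union>p\<in>Q. Cyl (fst p) (snd p))"
      using E_char by (auto simp: E_def Cyl_def)
    also have "\<dots> \<in> sets M"
      unfolding Q_def
      by (intro sets.countable_UN' countable_SIGMA countable_finite[OF finZn] countableI_type) (use Cyl_sets in auto)
    finally show ?thesis .
  qed
  have EG: "E - (space M - G) = (\<Union>p\<in>PP. Cyl (fst p) (snd p) - (space M - G))"
  proof (intro equalityI subsetI)
    fix \<omega> assume w: "\<omega> \<in> E - (space M - G)"
    then have ws: "\<omega> \<in> space M" "\<omega> \<in> G" by (auto simp: E_def)
    obtain zs vs where p: "zs \<in> Zn" "length vs = cnt zs" "condxy x y vs" "\<omega> \<in> Cyl zs vs"
      using E_char[OF ws(1)] w by (auto simp: Q_def)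
    have "set vs \<subseteq> D"
    proof
      fix v assume "v \<in> set vs"
      then obtain j where j: "j < length vs" "v = vs!j" by (auto simp: in_set_conv_nth)
      then have "j < n" using p(1,2) cnt_le[of zs] by (simp add: Zn_def)
      then have "(X (Suc j) \<omega>, Y (Suc j) \<omega>) \<in> D" using ws(2) by (simp add: G_def)
      moreover have "(X (Suc j) \<omega>, Y (Suc j) \<omega>) = v" using p(4) j by (auto simp: Cyl_def prod_eq_iff)
      ultimately show "v \<in> D" by simp
    qed
    then have "(zs, vs) \<in> PP" using p by (simp add: PP_def Lk_def)
    then show "\<omega> \<in> (\<Union>p\<in>PP. Cyl (fst p) (snd p) - (space M - G))" using p(4) ws by force
  next
    fix \<omega> assume "\<omega> \<in> (\<Union>p\<in>PP. Cyl (fst p) (snd p) - (space M - G))"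
    then obtain zs vs where p: "(zs,vs) \<in> PP" "\<omega> \<in> Cyl zs vs" "\<omega> \<in> G" by (auto simp: Cyl_def)
    then have "(zs,vs) \<in> Q" by (auto simp: PP_def Q_def Lk_def)
    moreover have "\<omega> \<in> space M" using p(2) by (simp add: Cyl_def)
    ultimately have "\<omega> \<in> E" using E_char[of \<omega>] p(2) by force
    then show "\<omega> \<in> E - (space M - G)" using p(3) by auto
  qed
  have finPP: "finite PP" unfolding PP_def by (intro finite_SigmaI finZn) (simp add: finite_Lk)
  have mE: "measure M E = (\<Sum>k\<in>{0..n}. f n k * Wk \<alpha> \<beta> x y k)"
  proof -
    have "measure M E = measure M (E - (space M - G))"
      by (rule measure_Diff_null_set[OF E_sets nullG, symmetric])
    also have "\<dots> = (\<Sum>p\<in>PP. measure M (Cyl (fst p) (snd p) - (space M - G)))"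
      unfolding EG
    proof (rule measure_finite_Union)
      show "disjoint_family_on (\<lambda>p. Cyl (fst p) (snd p) - (space M - G)) PP"
        unfolding disjoint_family_on_def
      proof (intro ballI impI)
        fix p q assume pq: "p \<in> PP" "q \<in> PP" "p \<noteq> q"
        show "(Cyl (fst p) (snd p) - (space M - G)) \<inter> (Cyl (fst q) (snd q) - (space M - G)) = {}"
        proof (rule ccontr)
          assume "(Cyl (fst p) (snd p) - (space M - G)) \<inter> (Cyl (fst q) (snd q) - (space M - G)) \<noteq> {}"
          then obtain \<omega> where "\<omega> \<in> Cyl (fst p) (snd p)" "\<omega> \<in> Cyl (fst q) (snd q)" by blast
          moreover have lz: "length (fst p) = length (fst q)" using pq by (auto simp: PP_def Zn_def)
          moreover have "fst p = fst q \<Longrightarrow> length (snd p) = length (snd q)" using pq by (auto simp: PP_def Lk_def)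
          ultimately have "fst p = fst q \<and> snd p = snd q" using Cyl_uniq Cyl_uniq_z
            by metis
          then show False using pq(3) by (simp add: prod_eq_iff)
        qed
      qed
    qed (use finPP Cyl_sets G_sets in auto)
    also have "\<dots> = (\<Sum>p\<in>PP. mc (fst p) * (\<Prod>j<length (snd p). step_prob \<alpha> \<beta> (snd p!j)))"
      by (intro sum.cong refl) (simp add: measure_Diff_null_set[OF Cyl_sets nullG] law')
    also have "\<dots> = (\<Sum>zs\<in>Zn. \<Sum>vs\<in>{vs \<in> Lk (cnt zs). condxy x y vs}. mc zs * (\<Prod>j<length vs. step_prob \<alpha> \<beta> (vs!j)))"
      unfolding PP_def by (subst sum.Sigma) (auto simp: finZn finite_Lk case_prod_beta)
    also have "\<dots> = (\<Sum>zs\<in>Zn. mc zs * Wk \<alpha> \<beta> x y (cnt zs))"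
    proof (intro sum.cong refl)
      fix zs assume "zs \<in> Zn"
      have "(\<Sum>vs\<in>{vs \<in> Lk (cnt zs). condxy x y vs}. mc zs * (\<Prod>j<length vs. step_prob \<alpha> \<beta> (vs!j)))
          = (\<Sum>vs\<in>{vs \<in> Lk (cnt zs). condxy x y vs}. mc zs * (\<Prod>j<cnt zs. step_prob \<alpha> \<beta> (vs!j)))"
        by (intro sum.cong refl) (auto simp: Lk_def)
      then show "(\<Sum>vs\<in>{vs \<in> Lk (cnt zs). condxy x y vs}. mc zs * (\<Prod>j<length vs. step_prob \<alpha> \<beta> (vs!j)))
          = mc zs * Wk \<alpha> \<beta> x y (cnt zs)"
        by (simp add: Wk_def sum_distrib_left)
    qed
    also have "\<dots> = (\<Sum>k\<in>{0..n}. \<Sum>zs\<in>{zs\<in>Zn. cnt zs = k}. mc zs * Wk \<alpha> \<beta> x y (cnt zs))"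
      by (rule sum.group[symmetric]) (use finZn cnt_le in \<open>auto simp: Zn_def\<close>)
    also have "\<dots> = (\<Sum>k\<in>{0..n}. f n k * Wk \<alpha> \<beta> x y k)"
      by (intro sum.cong refl) (simp add: fK sum_distrib_right)
    finally show ?thesis .
  qed

  show ?thesis
  proof (intro conjI impI)
    assume "odd (x - y)"
    then show "measure M {\<omega> \<in> space M. S n \<omega> = (x, y)} = 0"
      using mE by (simp add: E_def W_odd)
  next
    assume h: "0 \<le> x \<and> x \<le> 2 * int n \<and> - int n \<le> y \<and> y \<le> int n \<and> even (x - y)"
    define c where "c = \<lceil>real_of_int x / 2\<rceil>"
    have c0: "0 \<le> c" using h by (simp add: c_def)
    define T where "T = (\<lambda>k. f n k * Wk \<alpha> \<beta> x y k)"
    have "(\<Sum>k\<in>{c..int n}. f n (nat k) *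
             (\<Sum>j\<in>{max 0 (x - k)..min ((x + y) div 2) ((x - y) div 2)}.
                fact (nat k) * \<alpha> ^ nat (2 * j + k - x) * \<beta> ^ nat (x - 2 * j) /
                (fact (nat j) * fact (nat (j + k - x)) * fact (nat ((x + y) div 2 - j))
                  * fact (nat ((x - y) div 2 - j)))))
        = (\<Sum>k\<in>{c..int n}. T (nat k))"
    proof (intro sum.cong refl)
      fix k assume "k \<in> {c..int n}"
      then have k: "int (nat k) = k" using c0 by simp
      show "f n (nat k) *
             (\<Sum>j\<in>{max 0 (x - k)..min ((x + y) div 2) ((x - y) div 2)}.
                fact (nat k) * \<alpha> ^ nat (2 * j + k - x) * \<beta> ^ nat (x - 2 * j) /
                (fact (nat j) * fact (nat (j + k - x)) * fact (nat ((x + y) div 2 - j))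
                  * fact (nat ((x - y) div 2 - j)))) = T (nat k)"
        unfolding T_def W_closed[of x y \<alpha> \<beta> "nat k", OF conjunct2[OF conjunct2[OF conjunct2[OF conjunct2[OF h]]]]] k ..
    qed
    also have "\<dots> = (\<Sum>k\<in>{nat c..n}. T k)"
    proof -
      have "{c..int n} = int ` {nat c..n}" using c0 by (simp add: image_int_atLeastAtMost)
      then show ?thesis by (simp add: sum.reindex)
    qed
    also have "\<dots> = (\<Sum>k\<in>{0..n}. T k)"
    proof (rule sum.mono_neutral_left)
      show "\<forall>i\<in>{0..n} - {nat c..n}. T i = 0"
      proof
        fix i assume "i \<in> {0..n} - {nat c..n}"
        then have "i < nat c" by auto
        then have "int i < c" by simp
        then have "2 * int i < x" unfolding c_def by linarith
        then show "T i = 0" by (simp add: T_def W_small)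
      qed
    qed auto
    finally show "measure M {\<omega> \<in> space M. S n \<omega> = (x, y)} = (\<Sum>k\<in>{c..int n}. f n (nat k) *
             (\<Sum>j\<in>{max 0 (x - k)..min ((x + y) div 2) ((x - y) div 2)}.
                fact (nat k) * \<alpha> ^ nat (2 * j + k - x) * \<beta> ^ nat (x - 2 * j) /
                (fact (nat j) * fact (nat (j + k - x)) * fact (nat ((x + y) div 2 - j))
                  * fact (nat ((x - y) div 2 - j)))))"
      using mE by (simp add: E_def T_def)
  qed
qed


end
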